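(* Let $u,\gamma>0$, $s>0$, $\nu_0\in(0,1)$ and $\nu_1=1-\nu_0$, and let $F(y)=-y(1-y)[s+\gamma(1-y)]+u\nu_1(1-y)-u\nu_0y$. If $u<s$ or $\gamma<s$, then $F$ has exactly one root in $[0,1]$. *)

theory Defs
  imports Complex_Main
begin

end

theory Submission
  imports Defs
begin

lemma key_uniq:
  fixes u g s n0 z1 z2 :: real
  assumes u: "u > 0" and g: "g > 0" and s: "s > 0" and n0: "0 < n0"
    and z1: "0 \<le> z1" and z2: "0 \<le> z2" and lt: "z1 < z2"
    and P1: "-g*z1^3 + (g-s)*z1^2 + (s-u)*z1 + u*n0 = 0"
    and P2: "-g*z2^3 + (g-s)*z2^2 + (s-u)*z2 + u*n0 = 0"
    and c: "u < s \<or> g < s"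
  shows False
proof -
  have z1p: "z1 > 0" using P1 z1 u n0 by (cases "z1 = 0") (auto simp: power2_eq_square)
  have z2p: "z2 > 0" using z1p lt by simp
  have d: "(z1 - z2) * (-g*(z1^2+z1*z2+z2^2) + (g-s)*(z1+z2) + (s-u)) = 0"
    using P1 P2 by (simp add: algebra_simps power2_eq_square power3_eq_cube) 
  hence d2: "-g*(z1^2+z1*z2+z2^2) + (g-s)*(z1+z2) + (s-u) = 0" using lt by simp
  have id: "u*n0 = z1*z2*(g - s - g*(z1+z2))"
  proof -
    have "z2 * (-g*z1^3 + (g-s)*z1^2 + (s-u)*z1 + u*n0) - z1 * (-g*z2^3 + (g-s)*z2^2 + (s-u)*z2 + u*n0) = 0"
      using P1 P2 by simp
    hence "(z2 - z1) * (u*n0 - z1*z2*(g - s - g*(z1+z2))) = 0"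
      by (simp add: algebra_simps power2_eq_square power3_eq_cube)
    thus ?thesis using lt by simp
  qed
  have neg: "g - s - g*(z1+z2) < 0"
  proof (cases "g < s")
    case True
    have "g*(z1+z2) > 0" using z1p z2p g by simp
    thus ?thesis using True by simp
  next
    case False
    hence us: "u < s" using c by simp
    have "z2 * (g - s - g*z2) * z2 = -g*z2^3 + (g-s)*z2^2 + (s-u)*z2 + u*n0 - s*z2 + u*z2 - u*n0 - 0"
      by (simp add: algebra_simps power2_eq_square power3_eq_cube)
    also have "\<dots> = u*z2 - s*z2 - u*n0" using P2 by simp
    also have "\<dots> < 0"
    proof -
      have "u*z2 < s*z2" using us z2p by simp
      moreover have "u*n0 > 0" using u n0 by simp
      ultimately show ?thesis by simp
    qed
    finally have "z2 * (g - s - g*z2) * z2 < 0" .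
    hence "g - s - g*z2 < 0" using z2p
      by (metis linorder_not_le mult_nonneg_nonneg less_imp_le)
    moreover have "g*z1 > 0" using g z1p by simp
    ultimately show ?thesis by (simp add: distrib_left)
  qed
  have "z1*z2*(g - s - g*(z1+z2)) < 0" using neg z1p z2p
    by (simp add: mult_pos_neg)
  moreover have "u*n0 > 0" using u n0 by simp
  ultimately show False using id by simp
qed

theorem proposition3p2:
  fixes u \<gamma> s \<nu>\<^sub>0 \<nu>\<^sub>1 :: real and F :: "real \<Rightarrow> real"
  assumes "u > 0" and "\<gamma> > 0" and "s > 0"
    and "0 < \<nu>\<^sub>0" and "\<nu>\<^sub>0 < 1" and "\<nu>\<^sub>1 = 1 - \<nu>\<^sub>0"
    and "\<And>y. F y = - y * (1 - y) * (s + \<gamma> * (1 - y)) + u * \<nu>\<^sub>1 * (1 - y) - u * \<nu>\<^sub>0 * y"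
    and "u < s \<or> \<gamma> < s"
  shows "\<exists>!y. y \<in> {0..1} \<and> F y = 0"
proof -
  have Fe: "F = (\<lambda>y. - y * (1 - y) * (s + \<gamma> * (1 - y)) + u * \<nu>\<^sub>1 * (1 - y) - u * \<nu>\<^sub>0 * y)"
    using assms(7) by auto
  have P: "- F y = -\<gamma>*(1-y)^3 + (\<gamma>-s)*(1-y)^2 + (s-u)*(1-y) + u*\<nu>\<^sub>0" for y
    unfolding assms(7)[of y] assms(6) by (simp add: algebra_simps power2_eq_square power3_eq_cube)
  have ex: "\<exists>y\<ge>0. y \<le> 1 \<and> F y = 0"
    apply (rule IVT2)
    using assms by (auto simp: Fe)
  show ?thesis
  proof (rule ex_ex1I)
    show "\<exists>y. y \<in> {0..1} \<and> F y = 0" using ex by auto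
  next
    fix y1 y2 assume h1: "y1 \<in> {0..1} \<and> F y1 = 0" and h2: "y2 \<in> {0..1} \<and> F y2 = 0"
    show "y1 = y2"
    proof (rule ccontr)
      assume ne: "y1 \<noteq> y2"
      have Q1: "-\<gamma>*(1-y1)^3 + (\<gamma>-s)*(1-y1)^2 + (s-u)*(1-y1) + u*\<nu>\<^sub>0 = 0"
        using P[of y1] h1 by simp
      have Q2: "-\<gamma>*(1-y2)^3 + (\<gamma>-s)*(1-y2)^2 + (s-u)*(1-y2) + u*\<nu>\<^sub>0 = 0"
        using P[of y2] h2 by simp
      show False
      proof (cases "y1 < y2")
        case True
        show False
          by (rule key_uniq[of u \<gamma> s "\<nu>\<^sub>0" "1-y2" "1-y1", OF assms(1,2,3,4) _ _ _ Q2 Q1 assms(8)])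
             (use h1 h2 True in auto)
      next
        case False
        hence "y2 < y1" using ne by simp
        show False
          by (rule key_uniq[of u \<gamma> s "\<nu>\<^sub>0" "1-y1" "1-y2", OF assms(1,2,3,4) _ _ _ Q1 Q2 assms(8)])
             (use h1 h2 \<open>y2 < y1\<close> in auto)
      qed
    qed
  qed
qed

end
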